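(* Assume $\mathbf J$ is positive definite. Let $\mu$ be a global maximum point of $f$ of homogeneous type $k$, and let $F=\max_{\mathbb{R}^n}f$. Then there exists $\delta_\mu>0$ such that for every $t\in\mathbb{R}^n$, every $\delta\in(0,\delta_\mu]$ and every bounded continuous $\phi:\mathbb{R}^n\to\mathbb{R}$, $$\lim_{N\to\infty}e^{-\sum_l t_lN_l^{1/(2k)}\mu_l}\Big(\prod_{l=1}^nN_l\Big)^{1/(2k)}e^{-NF}\int_{B(\mu,\delta)}\exp\Big(Nf(x)+\sum_{l=1}^nt_lN_l^{1/(2k)}x_l\Big)\phi(x)\,dx=\phi(\mu)\int_{\mathbb{R}^n}\exp\Big(f^{\mu}_{2k}\Big(\frac{x}{\alpha^{1/(2k)}}\Big)+\langle t,x\rangle\Big)dx,$$ where $B(\mu,\delta)$ is the Euclidean ball of center $\mu$ and radius $\delta$, and the integral on the right is finite.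
   Context: Fix $n\ge1$, weights $\alpha_1,\dots,\alpha_n\in(0,1)$ with $\sum_l\alpha_l=1$, a real symmetric $n\times n$ matrix $\mathbf J=(J_{ls})$ with $J_{ll}>0$ (the reduced interaction matrix), and $\mathbf h\in\mathbb{R}^n$; $N_l=\alpha_lN$. Define $f(x)=-\frac12\sum_{l,s=1}^n\alpha_l\alpha_sJ_{ls}x_lx_s+\sum_{l=1}^n\alpha_l\ln\cosh\big(\sum_{s=1}^n\alpha_sJ_{ls}x_s+h_l\big)$ on $\mathbb{R}^n$. Homogeneous type: for a global maximum point $\mu$ of $f$, write the Taylor expansion $f(\mu+y)=f(\mu)+\sum_{j\ge1}T_j(y)$ with $T_j$ homogeneous polynomials of degree $j$; $\mu$ has homogeneous type $k$ (a positive integer) if $T_j\equiv0$ for $1\le j\le 2k-1$ and $T_{2k}(y)<0$ for all $y\neq0$; then set $f^{\mu}_{2k}=T_{2k}$. Vector notation: for $x\in\mathbb{R}^n$ and $\gamma\in\mathbb{R}$, $x/\alpha^{\gamma}=(x_1/\alpha_1^{\gamma},\dots,x_n/\alpha_n^{\gamma})$. *)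

theory Defs
  imports "HOL-Analysis.Analysis"
begin

definition curie_f :: "real^'n \<Rightarrow> real^'n^'n \<Rightarrow> real^'n \<Rightarrow> real^'n \<Rightarrow> real" where
  "curie_f \<alpha> J h x =
     - (1/2) * (\<Sum>l\<in>UNIV. \<Sum>s\<in>UNIV. \<alpha>$l * \<alpha>$s * J$l$s * x$l * x$s)
     + (\<Sum>l\<in>UNIV. \<alpha>$l * ln (cosh ((\<Sum>s\<in>UNIV. \<alpha>$s * J$l$s * x$s) + h$l)))"

definition taylor_term :: "(real^'n \<Rightarrow> real) \<Rightarrow> real^'n \<Rightarrow> nat \<Rightarrow> real^'n \<Rightarrow> real" where
  "taylor_term g mu j y = ((deriv ^^ j) (\<lambda>s. g (mu + s *\<^sub>R y)) 0) / fact j"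

definition homogeneous_type :: "(real^'n \<Rightarrow> real) \<Rightarrow> real^'n \<Rightarrow> nat \<Rightarrow> bool" where
  "homogeneous_type g mu k \<longleftrightarrow> k \<ge> 1 \<and>
     (\<forall>j. 1 \<le> j \<and> j \<le> 2*k - 1 \<longrightarrow> (\<forall>y. taylor_term g mu j y = 0)) \<and>
     (\<forall>y. y \<noteq> 0 \<longrightarrow> taylor_term g mu (2*k) y < 0)"

definition pos_def_matrix :: "real^'n^'n \<Rightarrow> bool" where
  "pos_def_matrix J \<longleftrightarrow> (\<forall>x. x \<noteq> 0 \<longrightarrow> x \<bullet> (J *v x) > 0)"

end

theory Submission
  imports Defs "HOL-Computational_Algebra.Polynomial"
begin


fun Dp :: "nat \<Rightarrow> real poly" where
  "Dp 0 = [:0,1:]"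
| "Dp (Suc j) = pderiv (Dp j) * [:1,0,-1:]"

definition LD :: "nat \<Rightarrow> real \<Rightarrow> real" where
  "LD j x = (if j = 0 then ln (cosh x) else poly (Dp (j-1)) (tanh x))"

lemma LD_deriv: "(LD j has_real_derivative LD (Suc j) x) (at x)"
proof (cases j)
  case 0
  have "((\<lambda>x. ln (cosh x)) has_real_derivative (1 / cosh x * sinh x)) (at x)"
    by (auto intro!: derivative_eq_intros simp: cosh_real_pos)
  moreover have "1 / cosh x * sinh x = tanh x" by (simp add: tanh_def)
  moreover have "LD 0 = (\<lambda>x. ln (cosh x))" by (simp add: LD_def fun_eq_iff)
  ultimately show ?thesis using 0 by (simp add: LD_def)
next
  case (Suc i)
  have "((\<lambda>x. poly (Dp i) (tanh x)) has_real_derivative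
          poly (pderiv (Dp i)) (tanh x) * (1 - tanh x ^ 2)) (at x)"
  proof (rule DERIV_chain2[OF poly_DERIV])
    have "((\<lambda>x. tanh x) has_real_derivative (1 - tanh x ^ 2) * 1) (at x)"
      by (rule has_field_derivative_tanh) (auto intro: DERIV_ident simp: cosh_real_pos[THEN less_imp_neq, symmetric])
    then show "(tanh has_real_derivative (1 - tanh x ^ 2)) (at x)" by simp
  qed
  moreover have "poly (Dp (Suc i)) (tanh x) = poly (pderiv (Dp i)) (tanh x) * (1 - tanh x ^ 2)"
    by (simp add: power2_eq_square algebra_simps)
  moreover have "LD (Suc i) = (\<lambda>x. poly (Dp i) (tanh x))" by (simp add: LD_def fun_eq_iff)
  ultimately show ?thesis using Suc by (simp add: LD_def)
qed

lemma LD_bounded: "\<exists>M. \<forall>x. \<bar>LD (Suc j) x\<bar> \<le> M"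
proof -
  have "compact (poly (Dp j) ` {-1..1})"
    by (intro compact_continuous_image continuous_intros) auto
  then obtain M where M: "\<And>z. z \<in> poly (Dp j) ` {-1..1} \<Longrightarrow> norm z \<le> M"
    using compact_imp_bounded bounded_iff by metis
  have "\<bar>LD (Suc j) x\<bar> \<le> M" for x
    using M[of "poly (Dp j) (tanh x)"] tanh_real_bounds[of x] by (auto simp: LD_def)
  then show ?thesis by blast
qed

lemma LD_cont: "continuous_on UNIV (LD j)"
  using LD_deriv DERIV_isCont continuous_at_imp_continuous_on by blast

lemma deriv_family:
  assumes "\<And>j s. (d j has_real_derivative d (Suc j) s) (at s)"
  shows "(deriv ^^ j) (d 0) = d j"
proof (induction j)
  case (Suc j)
  have "deriv (d j) x = d (Suc j) x" for x using assms DERIV_imp_deriv by blast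
  have "(deriv ^^ Suc j) (d 0) = deriv (d j)" by (simp add: Suc.IH)
  then show ?case using \<open>\<And>x. deriv (d j) x = d (Suc j) x\<close> by auto
qed simp



definition aa :: "real^'n \<Rightarrow> real^'n^'n \<Rightarrow> real^'n \<Rightarrow> real^'n \<Rightarrow> 'n \<Rightarrow> real" where
  "aa \<alpha> J h mu l = (\<Sum>s\<in>UNIV. \<alpha>$s * J$l$s * mu$s) + h$l"
definition bb :: "real^'n \<Rightarrow> real^'n^'n \<Rightarrow> real^'n \<Rightarrow> 'n \<Rightarrow> real" where
  "bb \<alpha> J y l = (\<Sum>s\<in>UNIV. \<alpha>$s * J$l$s * y$s)"
definition QQ :: "real^'n \<Rightarrow> real^'n^'n \<Rightarrow> real^'n \<Rightarrow> real" where
  "QQ \<alpha> J x = (\<Sum>l\<in>UNIV. \<Sum>s\<in>UNIV. \<alpha>$l * \<alpha>$s * J$l$s * x$l * x$s)"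
definition BB :: "real^'n \<Rightarrow> real^'n^'n \<Rightarrow> real^'n \<Rightarrow> real^'n \<Rightarrow> real" where
  "BB \<alpha> J mu y = (\<Sum>l\<in>UNIV. \<Sum>s\<in>UNIV. \<alpha>$l * \<alpha>$s * J$l$s * (mu$l * y$s + y$l * mu$s))"

lemma line_eq:
  "curie_f \<alpha> J h (mu + s *\<^sub>R y) =
     -1/2 * (QQ \<alpha> J mu + s * BB \<alpha> J mu y + s^2 * QQ \<alpha> J y)
     + (\<Sum>l\<in>UNIV. \<alpha>$l * LD 0 (aa \<alpha> J h mu l + s * bb \<alpha> J y l))"
proof -
  have 1: "(\<Sum>s'\<in>UNIV. \<alpha>$s' * J$l$s' * (mu + s *\<^sub>R y)$s') + h$l = aa \<alpha> J h mu l + s * bb \<alpha> J y l" for l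
    by (simp add: aa_def bb_def sum.distrib sum_distrib_left algebra_simps)
  have 2: "(\<Sum>l\<in>UNIV. \<Sum>s'\<in>UNIV. \<alpha>$l * \<alpha>$s' * J$l$s' * (mu + s *\<^sub>R y)$l * (mu + s *\<^sub>R y)$s')
      = QQ \<alpha> J mu + s * BB \<alpha> J mu y + s^2 * QQ \<alpha> J y"
    by (simp add: QQ_def BB_def sum.distrib sum_distrib_left algebra_simps power2_eq_square)
  show ?thesis unfolding curie_f_def 1 2 by (simp add: LD_def)
qed

lemma LD_deriv2: "((\<lambda>s. LD j (a + s*b)) has_real_derivative LD (Suc j) (a + s*b) * b) (at s)"
proof -
  have "((\<lambda>s. a + s*b) has_real_derivative b) (at s)"
    by (auto intro!: derivative_eq_intros)
  from DERIV_chain2[OF LD_deriv this] show ?thesis .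
qed

definition dd :: "real^'n \<Rightarrow> real^'n^'n \<Rightarrow> real^'n \<Rightarrow> real^'n \<Rightarrow> real^'n \<Rightarrow> nat \<Rightarrow> real \<Rightarrow> real" where
  "dd \<alpha> J h mu y j s =
     (if j = 0 then -1/2 * (QQ \<alpha> J mu + s * BB \<alpha> J mu y + s^2 * QQ \<alpha> J y)
      else if j = 1 then -1/2 * (BB \<alpha> J mu y + 2 * s * QQ \<alpha> J y)
      else if j = 2 then - QQ \<alpha> J y else 0)
     + (\<Sum>l\<in>UNIV. \<alpha>$l * bb \<alpha> J y l ^ j * LD j (aa \<alpha> J h mu l + s * bb \<alpha> J y l))"

lemma dd_deriv: "(dd \<alpha> J h mu y j has_real_derivative dd \<alpha> J h mu y (Suc j) s) (at s)"
proof -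
  have S: "((\<lambda>s. \<Sum>l\<in>UNIV. \<alpha>$l * bb \<alpha> J y l ^ j * LD j (aa \<alpha> J h mu l + s * bb \<alpha> J y l))
     has_real_derivative (\<Sum>l\<in>UNIV. \<alpha>$l * bb \<alpha> J y l ^ Suc j * LD (Suc j) (aa \<alpha> J h mu l + s * bb \<alpha> J y l))) (at s)"
  proof (rule DERIV_sum)
    fix l
    show "((\<lambda>s. \<alpha>$l * bb \<alpha> J y l ^ j * LD j (aa \<alpha> J h mu l + s * bb \<alpha> J y l)) has_real_derivative
        \<alpha>$l * bb \<alpha> J y l ^ Suc j * LD (Suc j) (aa \<alpha> J h mu l + s * bb \<alpha> J y l)) (at s)"
      using DERIV_cmult[OF LD_deriv2, of "\<alpha>$l * bb \<alpha> J y l ^ j" j "aa \<alpha> J h mu l" "bb \<alpha> J y l" s]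
      by (simp add: algebra_simps)
  qed
  consider "j = 0" | "j = 1" | "j = 2" | "j > 2" by linarith
  then show ?thesis
  proof cases
    case 1
    have "((\<lambda>s. -1/2 * (QQ \<alpha> J mu + s * BB \<alpha> J mu y + s^2 * QQ \<alpha> J y)) has_real_derivative
           -1/2 * (BB \<alpha> J mu y + 2 * s * QQ \<alpha> J y)) (at s)"
      by (auto intro!: derivative_eq_intros simp: algebra_simps)
    from DERIV_add[OF this S] show ?thesis using 1 by (simp add: dd_def[abs_def])
  next
    case 2
    have "((\<lambda>s. -1/2 * (BB \<alpha> J mu y + 2 * s * QQ \<alpha> J y)) has_real_derivative - QQ \<alpha> J y) (at s)"
      by (auto intro!: derivative_eq_intros simp: algebra_simps)
    from DERIV_add[OF this S] show ?thesis using 2 by (simp add: dd_def[abs_def])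
  next
    case 3
    have "((\<lambda>s. - QQ \<alpha> J y) has_real_derivative 0) (at s)"
      by (auto intro!: derivative_eq_intros)
    from DERIV_add[OF this S] show ?thesis using 3 by (simp add: dd_def[abs_def])
  next
    case 4
    have "((\<lambda>s. 0) has_real_derivative 0) (at s)"
      by (auto intro!: derivative_eq_intros)
    from DERIV_add[OF this S] show ?thesis using 4 by (simp add: dd_def[abs_def])
  qed
qed

lemma taylor_term_eq:
  "taylor_term (curie_f \<alpha> J h) mu j y = dd \<alpha> J h mu y j 0 / fact j"
proof -
  have "(\<lambda>s. curie_f \<alpha> J h (mu + s *\<^sub>R y)) = dd \<alpha> J h mu y 0"
    by (simp add: fun_eq_iff line_eq dd_def)
  then show ?thesis
    unfolding taylor_term_def using deriv_family[of "dd \<alpha> J h mu y", OF dd_deriv] by simp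
qed



lemma bb_bound: "\<bar>bb \<alpha> J y l\<bar> \<le> (\<Sum>s\<in>UNIV. \<bar>\<alpha>$s * J$l$s\<bar>) * norm y"
proof -
  have "\<bar>bb \<alpha> J y l\<bar> \<le> (\<Sum>s\<in>UNIV. \<bar>\<alpha>$s * J$l$s * y$s\<bar>)"
    unfolding bb_def by (rule sum_abs)
  also have "\<dots> \<le> (\<Sum>s\<in>UNIV. \<bar>\<alpha>$s * J$l$s\<bar> * norm y)"
    by (intro sum_mono) (auto simp: abs_mult intro!: mult_left_mono component_le_norm_cart)
  finally show ?thesis by (simp add: sum_distrib_right)
qed

lemma LD_taylor:
  "\<exists>t. LD 0 (a + x) = (\<Sum>m<n. LD m a / fact m * x ^ m) + LD n (a + t) / fact n * x ^ n"
proof -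
  have d: "\<forall>m x. ((\<lambda>x. LD m (a + x)) has_real_derivative LD (Suc m) (a + x)) (at x)"
    using LD_deriv2[of _ a 1] by simp
  from Maclaurin_all_le[of "\<lambda>m x. LD m (a + x)" "\<lambda>x. LD 0 (a + x)", OF refl d]
  show ?thesis by auto
qed

lemma taylor_sum_formula:
  assumes "k \<ge> 1"
  shows "(\<Sum>i<2*k. taylor_term (curie_f \<alpha> J h) mu (Suc i) y) =
     -1/2 * BB \<alpha> J mu y - 1/2 * QQ \<alpha> J y
     + (\<Sum>l\<in>UNIV. \<alpha>$l * (\<Sum>i<2*k. LD (Suc i) (aa \<alpha> J h mu l) / fact (Suc i) * bb \<alpha> J y l ^ Suc i))"
proof -
  let ?q = "\<lambda>j::nat. (if j = 0 then -1/2 * QQ \<alpha> J mu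
      else if j = 1 then -1/2 * BB \<alpha> J mu y else if j = 2 then - QQ \<alpha> J y else 0) / fact j"
  have tt: "taylor_term (curie_f \<alpha> J h) mu j y = ?q j +
      (\<Sum>l\<in>UNIV. \<alpha>$l * (LD j (aa \<alpha> J h mu l) / fact j * bb \<alpha> J y l ^ j))" for j
    by (simp add: taylor_term_eq dd_def add_divide_distrib sum_divide_distrib mult_ac)
  have q: "(\<Sum>i<2*k. ?q (Suc i)) = -1/2 * BB \<alpha> J mu y - 1/2 * QQ \<alpha> J y"
  proof -
    define m where "m = 2*k - 2"
    have m: "2*k = Suc (Suc m)" using assms by (simp add: m_def)
    have "(\<Sum>i<m. ?q (Suc (Suc (Suc i)))) = 0" by simp
    moreover have "(\<Sum>i<2*k. ?q (Suc i)) = ?q (Suc 0) + (?q (Suc (Suc 0)) + (\<Sum>i<m. ?q (Suc (Suc (Suc i)))))"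
      by (simp only: m sum.lessThan_Suc_shift)
    ultimately show ?thesis by simp
  qed
  have sw: "(\<Sum>i<2*k. \<Sum>l\<in>UNIV. \<alpha>$l * (LD (Suc i) (aa \<alpha> J h mu l) / fact (Suc i) * bb \<alpha> J y l ^ Suc i))
     = (\<Sum>l\<in>UNIV. \<alpha>$l * (\<Sum>i<2*k. LD (Suc i) (aa \<alpha> J h mu l) / fact (Suc i) * bb \<alpha> J y l ^ Suc i))"
    by (subst sum.swap) (simp add: sum_distrib_left)
  show ?thesis unfolding tt sum.distrib q sw by simp
qed

lemma taylor_bound:
  assumes k: "k \<ge> 1"
    and low: "\<forall>j. 1 \<le> j \<and> j \<le> 2*k - 1 \<longrightarrow> (\<forall>y. taylor_term (curie_f \<alpha> J h) mu j y = 0)"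
  shows "\<exists>C. \<forall>y. \<bar>curie_f \<alpha> J h (mu + y) - curie_f \<alpha> J h mu - taylor_term (curie_f \<alpha> J h) mu (2*k) y\<bar>
                 \<le> C * norm y ^ (2*k+1)"
proof -
  let ?g = "curie_f \<alpha> J h"
  let ?T = "taylor_term ?g mu"
  obtain M where M: "\<And>x. \<bar>LD (Suc (2*k)) x\<bar> \<le> M" using LD_bounded by blast
  have M0: "M \<ge> 0" using M[of 0] by linarith
  define K where "K l = (\<Sum>s\<in>UNIV. \<bar>\<alpha>$s * J$l$s\<bar>)" for l
  define C where "C = (\<Sum>l\<in>UNIV. \<bar>\<alpha>$l\<bar> * (M * K l ^ (2*k+1)))"
  have K0: "K l \<ge> 0" for l unfolding K_def by (auto intro: sum_nonneg)
  have "\<bar>?g (mu + y) - ?g mu - ?T (2*k) y\<bar> \<le> C * norm y ^ (2*k+1)" for y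
  proof -
    define m where "m = 2*k - 1"
    have m: "2*k = Suc m" using k by (simp add: m_def)
    have zero: "(\<Sum>i<m. ?T (Suc i) y) = 0"
      using low m by (intro sum.neutral) auto
    have "(\<Sum>i<2*k. ?T (Suc i) y) = (\<Sum>i<Suc m. ?T (Suc i) y)" by (simp add: m)
    also have "\<dots> = ?T (2*k) y" using zero m by simp
    finally have sumT: "(\<Sum>i<2*k. ?T (Suc i) y) = ?T (2*k) y" .
    have g1: "?g (mu + y) = -1/2 * (QQ \<alpha> J mu + BB \<alpha> J mu y + QQ \<alpha> J y)
       + (\<Sum>l\<in>UNIV. \<alpha>$l * LD 0 (aa \<alpha> J h mu l + bb \<alpha> J y l))"
      using line_eq[of \<alpha> J h mu 1 y] by simp
    have g0: "?g mu = -1/2 * QQ \<alpha> J mu + (\<Sum>l\<in>UNIV. \<alpha>$l * LD 0 (aa \<alpha> J h mu l))"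
      using line_eq[of \<alpha> J h mu 0 y] by simp
    define R where "R l = LD 0 (aa \<alpha> J h mu l + bb \<alpha> J y l) - LD 0 (aa \<alpha> J h mu l)
       - (\<Sum>i<2*k. LD (Suc i) (aa \<alpha> J h mu l) / fact (Suc i) * bb \<alpha> J y l ^ Suc i)" for l
    have e: "(\<Sum>l\<in>UNIV. \<alpha>$l * R l) = (\<Sum>l\<in>UNIV. \<alpha>$l * LD 0 (aa \<alpha> J h mu l + bb \<alpha> J y l))
       - (\<Sum>l\<in>UNIV. \<alpha>$l * LD 0 (aa \<alpha> J h mu l))
       - (\<Sum>l\<in>UNIV. \<alpha>$l * (\<Sum>i<2*k. LD (Suc i) (aa \<alpha> J h mu l) / fact (Suc i) * bb \<alpha> J y l ^ Suc i))"
      by (simp add: R_def right_diff_distrib sum_subtractf)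
    have diff: "?g (mu + y) - ?g mu - ?T (2*k) y = (\<Sum>l\<in>UNIV. \<alpha>$l * R l)"
      unfolding sumT[symmetric] taylor_sum_formula[OF k] g1 g0 e by (simp add: algebra_simps)
    have Rb: "\<bar>R l\<bar> \<le> M * K l ^ (2*k+1) * norm y ^ (2*k+1)" for l
    proof -
      obtain t where t: "LD 0 (aa \<alpha> J h mu l + bb \<alpha> J y l) =
         (\<Sum>m<Suc (2*k). LD m (aa \<alpha> J h mu l) / fact m * bb \<alpha> J y l ^ m)
         + LD (Suc (2*k)) (aa \<alpha> J h mu l + t) / fact (Suc (2*k)) * bb \<alpha> J y l ^ Suc (2*k)"
        using LD_taylor by blast
      have "R l = LD (Suc (2*k)) (aa \<alpha> J h mu l + t) / fact (Suc (2*k)) * bb \<alpha> J y l ^ Suc (2*k)"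
        unfolding R_def t sum.lessThan_Suc_shift by simp
      then have "\<bar>R l\<bar> = \<bar>LD (Suc (2*k)) (aa \<alpha> J h mu l + t)\<bar> / fact (Suc (2*k)) * \<bar>bb \<alpha> J y l\<bar> ^ Suc (2*k)"
        by (simp add: abs_mult power_abs)
      also have "\<dots> \<le> M / 1 * (K l * norm y) ^ Suc (2*k)"
      proof (intro mult_mono frac_le power_mono)
        show "\<bar>bb \<alpha> J y l\<bar> \<le> K l * norm y" unfolding K_def by (rule bb_bound)
      qed (use M M0 K0 fact_ge_1[of "Suc (2*k)", where 'a=real] in \<open>auto simp del: fact_Suc\<close>)
      finally show ?thesis by (simp add: power_mult_distrib mult_ac)
    qed
    have "\<bar>\<Sum>l\<in>UNIV. \<alpha>$l * R l\<bar> \<le> (\<Sum>l\<in>UNIV. \<bar>\<alpha>$l\<bar> * (M * K l ^ (2*k+1) * norm y ^ (2*k+1)))"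
      by (rule order_trans[OF sum_abs], rule sum_mono) (metis abs_ge_zero abs_mult mult_left_mono Rb)
    also have "\<dots> = C * norm y ^ (2*k+1)"
      unfolding C_def sum_distrib_right by (rule sum.cong) (simp_all add: mult_ac)
    finally show ?thesis using diff by simp
  qed
  then show ?thesis by blast
qed



lemma tt_formula:
  "taylor_term (curie_f \<alpha> J h) mu j y = (if j = 0 then -1/2 * QQ \<alpha> J mu
      else if j = 1 then -1/2 * BB \<alpha> J mu y else if j = 2 then - QQ \<alpha> J y else 0) / fact j +
      (\<Sum>l\<in>UNIV. \<alpha>$l * (LD j (aa \<alpha> J h mu l) / fact j * bb \<alpha> J y l ^ j))"
  by (simp add: taylor_term_eq dd_def add_divide_distrib sum_divide_distrib mult_ac)

lemma tt2k:
  assumes "k \<ge> 1"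
  shows "taylor_term (curie_f \<alpha> J h) mu (2*k) y = (if k = 1 then - QQ \<alpha> J y / 2 else 0) +
      (\<Sum>l\<in>UNIV. \<alpha>$l * (LD (2*k) (aa \<alpha> J h mu l) / fact (2*k) * bb \<alpha> J y l ^ (2*k)))"
  using assms unfolding tt_formula by auto

lemma bb_scale: "bb \<alpha> J (c *\<^sub>R y) l = c * bb \<alpha> J y l"
  by (simp add: bb_def sum_distrib_left mult_ac)

lemma QQ_scale: "QQ \<alpha> J (c *\<^sub>R y) = c^2 * QQ \<alpha> J y"
  by (simp add: QQ_def sum_distrib_left mult_ac power2_eq_square)

lemma tt_homog:
  assumes "k \<ge> 1"
  shows "taylor_term (curie_f \<alpha> J h) mu (2*k) (c *\<^sub>R y) = c^(2*k) * taylor_term (curie_f \<alpha> J h) mu (2*k) y"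
  unfolding tt2k[OF assms] bb_scale QQ_scale
  by (auto simp: sum_distrib_left power_mult_distrib mult_ac distrib_left)

lemma tt_cont:
  assumes "k \<ge> 1"
  shows "continuous_on UNIV (taylor_term (curie_f \<alpha> J h) mu (2*k))"
proof -
  have "taylor_term (curie_f \<alpha> J h) mu (2*k) = (\<lambda>y. (if k = 1 then - QQ \<alpha> J y / 2 else 0) +
      (\<Sum>l\<in>UNIV. \<alpha>$l * (LD (2*k) (aa \<alpha> J h mu l) / fact (2*k) * bb \<alpha> J y l ^ (2*k))))"
    by (rule ext) (rule tt2k[OF assms])
  moreover have "continuous_on UNIV (\<lambda>y. (if k = 1 then - QQ \<alpha> J y / 2 else 0) +
      (\<Sum>l\<in>UNIV. \<alpha>$l * (LD (2*k) (aa \<alpha> J h mu l) / fact (2*k) * bb \<alpha> J y l ^ (2*k))))"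
    unfolding QQ_def bb_def by (cases "k = 1") (auto intro!: continuous_intros)
  ultimately show ?thesis by simp
qed

lemma tt_neg_bound:
  assumes k: "k \<ge> 1" and neg: "\<forall>y. y \<noteq> 0 \<longrightarrow> taylor_term (curie_f \<alpha> J h) mu (2*k) y < 0"
  shows "\<exists>c>0. \<forall>y::real^'n. taylor_term (curie_f \<alpha> J h) mu (2*k) y \<le> - c * norm y ^ (2*k)"
proof -
  let ?T = "taylor_term (curie_f \<alpha> J h) mu (2*k)"
  have ne: "sphere (0::real^'n) 1 \<noteq> {}"
    by simp
  obtain y0 where y0: "y0 \<in> sphere 0 1" and mx: "\<And>y. y \<in> sphere 0 1 \<Longrightarrow> ?T y \<le> ?T y0"
    using continuous_attains_sup[OF compact_sphere ne continuous_on_subset[OF tt_cont[OF k]]] by blast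
  have "y0 \<noteq> 0" using y0 by auto
  then have c: "?T y0 < 0" using neg by blast
  have "?T y \<le> - (- ?T y0) * norm y ^ (2*k)" for y
  proof (cases "y = 0")
    case True
    have "?T (0 *\<^sub>R y) = 0" using tt_homog[OF k, where c=0 and y=y] k by simp
    then show ?thesis using True k by (simp add: power_0_left)
  next
    case False
    have "?T y = ?T (norm y *\<^sub>R (y /\<^sub>R norm y))" using False by simp
    also have "\<dots> = norm y ^ (2*k) * ?T (y /\<^sub>R norm y)" by (rule tt_homog[OF k])
    also have "\<dots> \<le> norm y ^ (2*k) * ?T y0"
      by (intro mult_left_mono mx) (use False in \<open>auto\<close>)
    finally show ?thesis by (simp add: mult_ac)
  qed
  then show ?thesis using c by (intro exI[of _ "- ?T y0"]) auto
qed

lemma local_bound: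
  assumes k: "k \<ge> 1" and hty: "homogeneous_type (curie_f \<alpha> J h) mu k"
  shows "\<exists>d>0. \<exists>c>0. \<forall>y. norm y \<le> d \<longrightarrow>
           curie_f \<alpha> J h (mu + y) - curie_f \<alpha> J h mu \<le> - c * norm y ^ (2*k)"
proof -
  let ?g = "curie_f \<alpha> J h"
  let ?T = "taylor_term ?g mu (2*k)"
  obtain C where C: "\<And>y. \<bar>?g (mu + y) - ?g mu - ?T y\<bar> \<le> C * norm y ^ (2*k+1)"
    using taylor_bound[OF k] hty unfolding homogeneous_type_def by blast
  obtain c where c: "c > 0" "\<And>y. ?T y \<le> - c * norm y ^ (2*k)"
    using tt_neg_bound[OF k] hty unfolding homogeneous_type_def by blast
  define C' where "C' = max C 1"
  have C'0: "C' > 0" by (simp add: C'_def)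
  define d where "d = c / (2 * C')"
  have d0: "d > 0" using c C'0 by (simp add: d_def)
  have "?g (mu + y) - ?g mu \<le> - (c/2) * norm y ^ (2*k)" if "norm y \<le> d" for y
  proof -
    have "C * norm y ^ (2*k+1) \<le> C' * (norm y * norm y ^ (2*k))"
      by (simp add: C'_def mult_right_mono)
    also have "\<dots> \<le> C' * (d * norm y ^ (2*k))"
      by (intro mult_left_mono mult_right_mono that) (use C'0 in \<open>auto\<close>)
    also have "\<dots> = (c/2) * norm y ^ (2*k)" using C'0 by (simp add: d_def)
    finally have "C * norm y ^ (2*k+1) \<le> (c/2) * norm y ^ (2*k)" .
    then show ?thesis using C[of y] c(2)[of y] by linarith
  qed
  then show ?thesis using d0 c by (intro exI[of _ d] conjI exI[of _ "c/2"]) auto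
qed



definition Bx :: "nat \<Rightarrow> (real^'n) set" where
  "Bx j = cbox (\<chi> i. - (real j + 1)) (\<chi> i. real j + 1)"

definition wt :: "'n itself \<Rightarrow> nat \<Rightarrow> real" where
  "wt _ j = 1 / (real j + 1) ^ (CARD('n) + 2)"

lemma content_Bx: "measure lborel (Bx j :: (real^'n) set) = (2 * (real j + 1)) ^ CARD('n)"
proof -
  have "Bx j \<noteq> ({}::(real^'n) set)" unfolding Bx_def interval_eq_empty_cart by simp
  then show ?thesis unfolding Bx_def by (simp add: content_cbox_cart prod_constant)
qed

lemma pow_aux: "(a::real) > 0 \<Longrightarrow> (2 * a) ^ n / a ^ (n + 2) = 2 ^ n / a ^ 2"
proof -
  assume a: "a > 0"
  have "(2 * a) ^ n / a ^ (n + 2) = (2 ^ n / a ^ 2) * (a ^ n / a ^ n)"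
    by (simp add: power_mult_distrib power_add power2_eq_square)
  also have "\<dots> = 2 ^ n / a ^ 2" using a by simp
  finally show ?thesis .
qed

lemma base_integrable:
  "(\<lambda>u::real^'n. 1 / (1 + norm u) ^ (CARD('n) + 2)) integrable_on UNIV"
proof -
  let ?n = "CARD('n)"
  define w where "w j = (1::real) / (real j + 1) ^ (?n + 2)" for j
  define f where "f K u = (\<Sum>j<K. if u \<in> (Bx j :: (real^'n) set) then w j else 0)" for K u
  define g where "g u = (\<Sum>j. if u \<in> (Bx j :: (real^'n) set) then w j else 0)" for u
  have w0: "w j \<ge> 0" for j by (simp add: w_def)
  have sw: "summable w"
  proof -
    have "summable (\<lambda>j. inverse (real j ^ (?n + 2)))"
      by (rule inverse_power_summable) simp
    from summable_Suc_iff[where f="\<lambda>j. inverse (real j ^ (?n + 2))", THEN iffD2, OF this]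
    have "summable (\<lambda>j. inverse (real (Suc j) ^ (?n + 2)))" by simp
    moreover have "w = (\<lambda>j. inverse (real (Suc j) ^ (?n + 2)))"
      by (rule ext) (simp add: w_def divide_inverse add.commute)
    ultimately show ?thesis by simp
  qed
  have sumg: "summable (\<lambda>j. if u \<in> (Bx j :: (real^'n) set) then w j else 0)" for u
    by (rule summable_comparison_test[OF _ sw]) (auto simp: w0)
  have int_ind: "((\<lambda>u. if u \<in> (Bx j :: (real^'n) set) then w j else 0) has_integral measure lborel (Bx j :: (real^'n) set) * w j) UNIV" for j
    unfolding has_integral_restrict_UNIV Bx_def using has_integral_const[of "w j"] by (simp add: Bx_def)
  have v: "measure lborel (Bx j :: (real^'n) set) * w j = 2^?n * inverse (real (Suc j) ^ 2)" for j
  proof -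
    have "measure lborel (Bx j :: (real^'n) set) * w j = (2 * (real j + 1))^?n / (real j + 1) ^ (?n + 2)"
      by (simp add: content_Bx w_def)
    also have "\<dots> = 2^?n / (real j + 1) ^ 2"
      by (rule pow_aux) simp
    finally show ?thesis by (simp add: divide_inverse add.commute)
  qed
  have sv: "summable (\<lambda>j. measure lborel (Bx j :: (real^'n) set) * w j)"
    unfolding v
  proof (intro summable_mult)
    have "summable (\<lambda>j. inverse (real j ^ 2))"
      by (rule inverse_power_summable) simp
    from summable_Suc_iff[where f="\<lambda>j. inverse (real j ^ 2)", THEN iffD2, OF this]
    show "summable (\<lambda>j. inverse (real (Suc j) ^ 2))" by simp
  qed
  have int1: "\<And>j. (\<lambda>u. if u \<in> (Bx j :: (real^'n) set) then w j else 0) integrable_on UNIV"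
    using int_ind has_integral_integrable by blast
  have mono: "\<And>K u. f K u \<le> f (Suc K) u" by (simp add: f_def w0)
  have intf: "\<And>K. f K integrable_on UNIV"
    unfolding f_def by (intro integrable_sum int1) simp
  have integf: "integral UNIV (f K) = (\<Sum>j<K. measure lborel (Bx j :: (real^'n) set) * w j)" for K
    unfolding f_def
  proof (subst integral_sum)
    show "(\<Sum>a<K. integral UNIV (\<lambda>u. if u \<in> (Bx a :: (real^'n) set) then w a else 0)) =
       (\<Sum>j<K. measure lborel (Bx j :: (real^'n) set) * w j)"
      by (rule sum.cong[OF refl], rule integral_unique[OF int_ind])
  qed (auto intro: int1)
  have bnd: "bounded (range (\<lambda>K. integral UNIV (f K)))"
  proof -
    have "\<bar>integral UNIV (f K)\<bar> \<le> (\<Sum>j. measure lborel (Bx j :: (real^'n) set) * w j)" for K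
    proof -
      have "0 \<le> (\<Sum>j<K. measure lborel (Bx j :: (real^'n) set) * w j)" by (auto intro!: sum_nonneg simp: w0)
      moreover have "(\<Sum>j<K. measure lborel (Bx j :: (real^'n) set) * w j) \<le> (\<Sum>j. measure lborel (Bx j :: (real^'n) set) * w j)"
        by (rule sum_le_suminf[OF sv]) (auto simp: w0)
      ultimately show ?thesis unfolding integf by simp
    qed
    then show ?thesis unfolding bounded_iff by auto
  qed
  have lim: "\<And>u. (\<lambda>K. f K u) \<longlonglongrightarrow> g u"
    unfolding f_def g_def using sumg summable_LIMSEQ by blast
  have gint: "g integrable_on UNIV"
    using monotone_convergence_increasing[OF intf mono lim bnd] by blast
  show ?thesis
  proof (rule integrable_on_all_intervals_UNIV[OF _ _ gint])
    have nz: "\<forall>u::real^'n. 1 + norm u \<noteq> 0" by (smt (verit) norm_ge_zero)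
    show "(\<lambda>u::real^'n. 1 / (1 + norm u) ^ (?n + 2)) integrable_on cbox a b" for a b
      using nz by (intro integrable_continuous continuous_intros) auto
    fix u :: "real^'n"
    define j where "j = nat \<lfloor>norm u\<rfloor>"
    have fl: "real j = real_of_int \<lfloor>norm u\<rfloor>" unfolding j_def using norm_ge_zero[of u] by simp
    have j1: "real j \<le> norm u" "norm u < real j + 1" using fl floor_correct[of "norm u"] by auto
    have "u \<in> Bx j"
      unfolding Bx_def mem_box_cart
    proof
      fix i
      have "\<bar>u$i\<bar> \<le> norm u" by (rule component_le_norm_cart)
      then have "- (real j + 1) \<le> u$i \<and> u$i \<le> real j + 1" using j1 by linarith
      then show "(\<chi> i. - (real j + 1)) $ i \<le> u $ i \<and> u $ i \<le> (\<chi> i. real j + 1) $ i" by simp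
    qed
    have "norm (1 / (1 + norm u) ^ (?n + 2)) = 1 / (1 + norm u) ^ (?n + 2)" by simp
    also have "\<dots> \<le> w j" unfolding w_def
      by (intro divide_left_mono power_mono mult_pos_pos) (use j1 in auto)
    also have "\<dots> = (\<Sum>i\<in>{j}. if u \<in> (Bx i :: (real^'n) set) then w i else 0)" using \<open>u \<in> Bx j\<close> by simp
    also have "\<dots> \<le> g u" unfolding g_def
      by (rule sum_le_suminf[OF sumg]) (auto simp: w0)
    finally show "norm (1 / (1 + norm u) ^ (?n + 2)) \<le> g u" .
  qed
qed


lemma dom_integrable:
  fixes f :: "real^'n \<Rightarrow> real"
  assumes "continuous_on UNIV f" and "\<And>u. \<bar>f u\<bar> \<le> K * (1 / (1 + norm u) ^ (CARD('n) + 2))"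
  shows "f integrable_on UNIV"
proof (rule integrable_on_all_intervals_UNIV)
  show "f integrable_on cbox a b" for a b
    using assms(1) by (rule integrable_continuous[OF continuous_on_subset]) simp
  show "norm (f u) \<le> K * (1 / (1 + norm u) ^ (CARD('n) + 2))" for u using assms(2) by simp
  show "(\<lambda>u::real^'n. K * (1 / (1 + norm u) ^ (CARD('n) + 2))) integrable_on UNIV"
    using integrable_cmul[OF base_integrable[where 'n='n], of K] by simp
qed

lemma quad_bound: "(c::real) > 0 \<Longrightarrow> - c * r^2 + B * r \<le> B^2 / (4*c)"
proof -
  assume c: "c > 0"
  have "0 \<le> (2*c*r - B)^2" by simp
  then have "4*c*(- c * r^2 + B * r) \<le> B^2" by (simp add: power2_eq_square algebra_simps)
  then show ?thesis using c by (simp add: field_simps)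
qed

lemma exp_decay:
  assumes c: "c > 0" and k: "k \<ge> 1" and r: "r \<ge> 0"
  shows "exp (- c * r^(2*k) + b * r) \<le> exp (c + (b + real m)^2 / (4*c)) / (1 + r) ^ m"
proof -
  have p: "r^2 - 1 \<le> r^(2*k)"
  proof (cases "r \<ge> 1")
    case True
    have "r^2 \<le> r^(2*k)" by (rule power_increasing) (use k True in auto)
    then show ?thesis by simp
  next
    case False
    then have "r^2 \<le> 1" using r by (simp add: power_le_one)
    then show ?thesis using r by (smt (verit) zero_le_power)
  qed
  have e1: "(1 + r) ^ m \<le> exp (real m * r)"
  proof -
    have "(1 + r) ^ m \<le> exp r ^ m" by (rule power_mono) (use r in \<open>auto simp: exp_ge_add_one_self\<close>)
    then show ?thesis by (simp add: exp_of_nat_mult)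
  qed
  have "exp (- c * r^(2*k) + b * r) * (1 + r) ^ m \<le> exp (- c * r^(2*k) + b * r) * exp (real m * r)"
    by (rule mult_left_mono[OF e1]) simp
  also have "\<dots> = exp (- c * r^(2*k) + (b + real m) * r)" by (simp add: exp_add[symmetric] algebra_simps)
  also have "\<dots> \<le> exp (c + (- c * r^2 + (b + real m) * r))"
    using mult_left_mono[OF p, of c] c by (intro exp_le_cancel_iff[THEN iffD2]) (simp add: algebra_simps)
  also have "\<dots> \<le> exp (c + (b + real m)^2 / (4*c))"
    using quad_bound[OF c, of r "b + real m"] by simp
  finally show ?thesis using r by (simp add: field_simps)
qed

lemma exp_decay_integrable:
  fixes f :: "real^'n \<Rightarrow> real"
  assumes cont: "continuous_on UNIV f" and c: "c > 0" and k: "k \<ge> 1"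
    and bnd: "\<And>u. \<bar>f u\<bar> \<le> B * exp (- c * norm u^(2*k) + b * norm u)"
  shows "f integrable_on UNIV"
proof (rule dom_integrable[OF cont])
  fix u :: "real^'n"
  let ?m = "CARD('n) + 2"
  have B0: "B \<ge> 0" using bnd[of u] by (smt (verit) exp_gt_zero mult_neg_pos)
  have "\<bar>f u\<bar> \<le> B * exp (- c * norm u^(2*k) + b * norm u)" by (rule bnd)
  also have "\<dots> \<le> B * (exp (c + (b + real ?m)^2 / (4*c)) / (1 + norm u) ^ ?m)"
    by (intro mult_left_mono exp_decay c k B0) simp
  finally show "\<bar>f u\<bar> \<le> (B * exp (c + (b + real ?m)^2 / (4*c))) * (1 / (1 + norm u) ^ ?m)"
    by simp
qed



lemma norm_mono_cart: "(\<And>l. \<bar>u$l\<bar> \<le> \<bar>v$l\<bar>) \<Longrightarrow> norm (u::real^'n) \<le> norm v"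
  unfolding norm_vec_def by (rule L2_set_mono) auto

lemma cont_wscale: "(\<And>l. a l \<noteq> 0) \<Longrightarrow> continuous_on UNIV (\<lambda>u::real^'n. \<chi> l. u$l / a l)"
  by (intro continuous_intros) auto

lemma cov:
  fixes Hf :: "real^'n \<Rightarrow> real" and \<nu> :: "'n \<Rightarrow> real"
  assumes cont: "continuous_on UNIV Hf" and d: "\<delta> > 0" and nu: "\<And>l. \<nu> l > 0"
  shows "((\<lambda>u. if mu + (\<chi> l. u$l / \<nu> l) \<in> ball mu \<delta> then Hf (mu + (\<chi> l. u$l / \<nu> l)) else 0)
           has_integral (prod \<nu> UNIV * integral (ball mu \<delta>) Hf)) UNIV"
proof -
  define Hs where "Hs x = (if x \<in> ball mu \<delta> then Hf x else 0)" for x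
  define a :: "real^'n" where "a = (\<chi> l. - \<delta>)"
  define b :: "real^'n" where "b = (\<chi> l. \<delta>)"
  let ?I = "integral (ball mu \<delta>) Hf"
  have ball0: "ball 0 \<delta> \<subseteq> cbox a b"
  proof
    fix z :: "real^'n" assume "z \<in> ball 0 \<delta>"
    then have nz: "norm z < \<delta>" by simp
    show "z \<in> cbox a b" unfolding mem_box_cart a_def b_def
    proof
      fix i
      have "\<bar>z$i\<bar> \<le> norm z" by (rule component_le_norm_cart)
      then have "- \<delta> \<le> z $ i \<and> z $ i \<le> \<delta>" using nz by (simp add: abs_le_iff)
      then show "(\<chi> l. - \<delta>) $ i \<le> z $ i \<and> z $ i \<le> (\<chi> l. \<delta>) $ i" by simp
    qed
  qed
  have ballsub: "ball mu \<delta> \<subseteq> cbox (a + mu) (b + mu)"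
  proof
    fix x assume "x \<in> ball mu \<delta>"
    then have "x - mu \<in> ball 0 \<delta>" by (simp add: dist_norm norm_minus_commute)
    then have "x - mu \<in> cbox a b" using ball0 by blast
    then have hh: "\<And>i. a$i \<le> x$i - mu$i \<and> x$i - mu$i \<le> b$i" unfolding mem_box_cart by simp
    show "x \<in> cbox (a + mu) (b + mu)" unfolding mem_box_cart
    proof
      fix i show "(a + mu) $ i \<le> x $ i \<and> x $ i \<le> (b + mu) $ i" using hh[of i] by simp
    qed
  qed
  have "Hf absolutely_integrable_on cbox (a + mu) (b + mu)"
    by (rule absolutely_integrable_continuous[OF continuous_on_subset[OF cont]]) simp
  then have "Hf absolutely_integrable_on ball mu \<delta>"
    by (rule set_integrable_subset) (use ballsub in \<open>auto intro: fmeasurableD\<close>)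
  then have "Hf integrable_on ball mu \<delta>" by (rule set_lebesgue_integral_eq_integral(1))
  then have "(Hf has_integral ?I) (ball mu \<delta>)" by (rule integrable_integral)
  then have "(Hs has_integral ?I) UNIV"
    unfolding Hs_def by (rule has_integral_restrict_UNIV[THEN iffD2])
  moreover have "(\<lambda>x. if x \<in> cbox (a + mu) (b + mu) then Hs x else 0) = Hs"
    using ballsub by (auto simp: Hs_def fun_eq_iff)
  ultimately have "(Hs has_integral ?I) (cbox (a + mu) (b + mu))"
    using has_integral_restrict_UNIV[of "cbox (a + mu) (b + mu)" Hs ?I] by simp
  then have "((Hs \<circ> (+) mu) has_integral ?I) (cbox a b)"
    using has_integral_shift_cbox_iff by blast
  from has_integral_stretch_cart[OF this, of "\<lambda>l. 1 / \<nu> l"]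
  have st: "((\<lambda>x. (Hs \<circ> (+) mu) (\<chi> k. 1 / \<nu> k * x$k)) has_integral ?I /\<^sub>R \<bar>prod (\<lambda>l. 1 / \<nu> l) UNIV\<bar>)
           ((\<lambda>x. \<chi> k. x$k / (1 / \<nu> k)) ` cbox a b)" using nu by (simp add: less_imp_neq[symmetric])
  have fun_eq: "(\<lambda>x. (Hs \<circ> (+) mu) (\<chi> k. 1 / \<nu> k * x$k)) =
     (\<lambda>u. if mu + (\<chi> l. u$l / \<nu> l) \<in> ball mu \<delta> then Hf (mu + (\<chi> l. u$l / \<nu> l)) else 0)"
    by (simp add: Hs_def fun_eq_iff)
  have val: "?I /\<^sub>R \<bar>prod (\<lambda>l. 1 / \<nu> l) UNIV\<bar> = prod \<nu> UNIV * ?I"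
  proof -
    have "prod (\<lambda>l. 1 / \<nu> l) UNIV = 1 / prod \<nu> UNIV" by (simp add: prod_dividef)
    moreover have "prod \<nu> UNIV > 0" using nu by (simp add: prod_pos)
    ultimately show ?thesis by simp
  qed
  show ?thesis
  proof (rule has_integral_on_superset[OF st[unfolded fun_eq val]])
    fix u assume nin: "u \<notin> (\<lambda>x. \<chi> k. x$k / (1 / \<nu> k)) ` cbox a b"
    show "(if mu + (\<chi> l. u$l / \<nu> l) \<in> ball mu \<delta> then Hf (mu + (\<chi> l. u$l / \<nu> l)) else 0) = 0"
    proof (rule ccontr)
      assume "(if mu + (\<chi> l. u$l / \<nu> l) \<in> ball mu \<delta> then Hf (mu + (\<chi> l. u$l / \<nu> l)) else 0) \<noteq> 0"
      then have "mu + (\<chi> l. u$l / \<nu> l) \<in> ball mu \<delta>" by presburger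
      then have "(\<chi> l. u$l / \<nu> l) \<in> ball 0 \<delta>" by (simp add: dist_norm)
      then have "(\<chi> l. u$l / \<nu> l) \<in> cbox a b" using ball0 by blast
      moreover have "u = (\<lambda>x. \<chi> k. x$k / (1 / \<nu> k)) (\<chi> l. u$l / \<nu> l)"
        using nu by (simp add: vec_eq_iff less_imp_neq[symmetric])
      ultimately show False using nin by blast
    qed
  qed simp
qed



lemma curie_cont: "continuous_on UNIV (curie_f \<alpha> J h)"
  unfolding curie_f_def[abs_def]
  by (intro continuous_intros) (auto simp: cosh_real_pos less_imp_neq[symmetric])

lemma pow_scale:
  assumes N: "N > 0" and kr: "real (2*k) * r = 1"
  shows "(N powr (- r)) ^ (2*k) = 1 / N"
proof -
  have N0: "N \<noteq> 0" using N by simp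
  have "(N powr (- r)) ^ (2*k) = N powr (real (2*k) * (- r))"
    by (rule powr_power[OF N0])
  also have "real (2*k) * (- r) = -1" using kr by (simp only: mult_minus_right)
  also have "N powr (-1) = inverse (N powr 1)" by (rule powr_minus)
  also have "N powr 1 = N" using N by simp
  finally show ?thesis by (simp only: divide_inverse mult_1)
qed

lemma iota_eq:
  assumes "N > 0" "\<And>l. \<alpha>$l > 0"
  shows "(\<chi> l. u$l / (\<alpha>$l * N) powr r) = (N powr (-r)) *\<^sub>R (\<chi> l. u$l / \<alpha>$l powr r)"
  using assms by (simp add: vec_eq_iff powr_mult powr_minus field_simps)

lemma main:
  fixes \<alpha> :: "real^'n" and J :: "real^'n^'n" and h :: "real^'n" and mu :: "real^'n" and k :: nat
  assumes alpha_pos: "\<forall>l. 0 < \<alpha>$l \<and> \<alpha>$l < 1"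
    and alpha_sum: "(\<Sum>l\<in>UNIV. \<alpha>$l) = 1"
    and J_sym: "transpose J = J"
    and J_diag: "\<forall>l. J$l$l > 0"
    and J_pd: "pos_def_matrix J"
    and mu_max: "\<forall>x. curie_f \<alpha> J h x \<le> curie_f \<alpha> J h mu"
    and mu_type: "homogeneous_type (curie_f \<alpha> J h) mu k"
  shows "\<exists>\<delta>\<mu>>0. \<forall>(t::real^'n) \<delta> (\<phi>::real^'n \<Rightarrow> real).
           0 < \<delta> \<and> \<delta> \<le> \<delta>\<mu> \<and> continuous_on UNIV \<phi> \<and> bounded (range \<phi>) \<longrightarrow>
           (\<lambda>x. exp (taylor_term (curie_f \<alpha> J h) mu (2*k)
                         (\<chi> l. x$l / (\<alpha>$l powr (1 / (2 * real k)))) + t \<bullet> x))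
             integrable_on UNIV \<and>
           ((\<lambda>N::real.
               exp (- (\<Sum>l\<in>UNIV. t$l * (\<alpha>$l * N) powr (1 / (2 * real k)) * mu$l))
               * (\<Prod>l\<in>UNIV. \<alpha>$l * N) powr (1 / (2 * real k))
               * exp (- N * curie_f \<alpha> J h mu)
               * integral (ball mu \<delta>)
                   (\<lambda>x. exp (N * curie_f \<alpha> J h x
                             + (\<Sum>l\<in>UNIV. t$l * (\<alpha>$l * N) powr (1 / (2 * real k)) * x$l))
                        * \<phi> x))
            \<longlongrightarrow> \<phi> mu * integral UNIV
                 (\<lambda>x. exp (taylor_term (curie_f \<alpha> J h) mu (2*k)
                         (\<chi> l. x$l / (\<alpha>$l powr (1 / (2 * real k)))) + t \<bullet> x))) at_top"
proof -
  let ?g = "curie_f \<alpha> J h"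
  let ?F = "?g mu"
  let ?T = "taylor_term ?g mu (2*k)"
  have k: "k \<ge> 1" using mu_type by (simp add: homogeneous_type_def)
  have apos: "\<And>l. \<alpha>$l > 0" using alpha_pos by blast
  obtain dmu where dmu: "dmu > 0" and "\<exists>c>0. \<forall>y. norm y \<le> dmu \<longrightarrow> ?g (mu + y) - ?F \<le> - c * norm y ^ (2*k)"
    using local_bound[OF k mu_type] by blast
  then obtain c2 where c2: "c2 > 0" and lb: "\<And>y. norm y \<le> dmu \<Longrightarrow> ?g (mu + y) - ?F \<le> - c2 * norm y ^ (2*k)"
    by blast
  obtain C where C: "\<And>y. \<bar>?g (mu + y) - ?F - ?T y\<bar> \<le> C * norm y ^ (2*k+1)"
    using taylor_bound[OF k] mu_type unfolding homogeneous_type_def by blast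
  obtain c where c: "c > 0" "\<And>y. ?T y \<le> - c * norm y ^ (2*k)"
    using tt_neg_bound[OF k] mu_type unfolding homogeneous_type_def by blast
  define r where "r = 1 / (2 * real k)"
  have r_eq: "1 / (2 * real k) = r" by (simp add: r_def)
  have r0: "r > 0" using k by (simp add: r_def)
  define w where "w u = (\<chi> l. u$l / \<alpha>$l powr r)" for u :: "real^'n"
  have av0: "\<alpha>$l powr r > 0" for l using apos[of l] by simp
  have av1: "\<alpha>$l powr r \<le> 1" for l
  proof -
    have "0 \<le> \<alpha>$l" "\<alpha>$l \<le> 1" using alpha_pos by (auto simp: less_imp_le)
    then show ?thesis using powr_mono2[of r "\<alpha>$l" 1] r0 by simp
  qed
  have norm_w: "norm u \<le> norm (w u)" for u
  proof (rule norm_mono_cart)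
    fix l
    have "\<bar>u$l\<bar> * (\<alpha>$l powr r) \<le> \<bar>u$l\<bar> * 1" by (rule mult_left_mono[OF av1]) simp
    then show "\<bar>u$l\<bar> \<le> \<bar>w u $ l\<bar>" using av0[of l] by (simp add: w_def abs_divide le_divide_eq)
  qed
  have cw: "continuous_on UNIV w"
    unfolding w_def[abs_def] by (rule cont_wscale) (use av0 in \<open>auto simp: less_imp_neq[symmetric]\<close>)
  have cT: "continuous_on UNIV (\<lambda>u. ?T (w u))"
    using continuous_on_compose2[OF tt_cont[OF k] cw] by simp
  have Tw: "?T (w u) \<le> - c * norm u ^ (2*k)" for u
  proof -
    have "norm u ^ (2*k) \<le> norm (w u) ^ (2*k)" by (rule power_mono[OF norm_w]) simp
    then have "- c * norm (w u) ^ (2*k) \<le> - c * norm u ^ (2*k)" using c(1) by simp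
    then show ?thesis using c(2)[of "w u"] by linarith
  qed
  show ?thesis unfolding r_eq
  proof (intro exI[of _ dmu] conjI allI impI dmu)
    fix t :: "real^'n" and \<delta> :: real and \<phi> :: "real^'n \<Rightarrow> real"
    assume asm: "0 < \<delta> \<and> \<delta> \<le> dmu \<and> continuous_on UNIV \<phi> \<and> bounded (range \<phi>)"
    then have d0: "\<delta> > 0" and dle: "\<delta> \<le> dmu" and phic: "continuous_on UNIV \<phi>" and phib: "bounded (range \<phi>)"
      by auto
    obtain Bp where Bp: "\<And>x. \<bar>\<phi> x\<bar> \<le> Bp" using phib unfolding bounded_iff by auto
    have Bp0: "Bp \<ge> 0" using Bp[of 0] by linarith
    define E where "E u = exp (?T (w u) + t \<bullet> u)" for u
    have contE: "continuous_on UNIV E" unfolding E_def[abs_def]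
      by (intro continuous_intros cT)
    have Eint: "E integrable_on UNIV"
    proof (rule exp_decay_integrable[OF contE c(1) k])
      fix u
      have "t \<bullet> u \<le> norm t * norm u" by (rule norm_cauchy_schwarz)
      then have "\<bar>E u\<bar> \<le> exp (- c * norm u ^ (2*k) + norm t * norm u)"
        using Tw[of u] by (simp add: E_def)
      then show "\<bar>E u\<bar> \<le> 1 * exp (- c * norm u ^ (2*k) + norm t * norm u)" by simp
    qed
    show "(\<lambda>x. exp (?T (\<chi> l. x$l / \<alpha>$l powr r) + t \<bullet> x)) integrable_on UNIV"
      using Eint by (simp add: E_def[abs_def] w_def[abs_def])
    define \<nu> where "\<nu> N l = (\<alpha>$l * N) powr r" for N l
    define \<iota> where "\<iota> N u = (\<chi> l. u$l / \<nu> N l)" for N u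
    define G where "G N u = (if mu + \<iota> N u \<in> ball mu \<delta>
        then exp (N * (?g (mu + \<iota> N u) - ?F) + t \<bullet> u) * \<phi> (mu + \<iota> N u) else 0)" for N u
    define Ex where "Ex N = exp (- (\<Sum>l\<in>UNIV. t$l * (\<alpha>$l * N) powr r * mu$l))
               * (\<Prod>l\<in>UNIV. \<alpha>$l * N) powr r
               * exp (- N * ?F)
               * integral (ball mu \<delta>)
                   (\<lambda>x. exp (N * ?g x + (\<Sum>l\<in>UNIV. t$l * (\<alpha>$l * N) powr r * x$l)) * \<phi> x)" for N
    have kr: "real (2*k) * r = 1" using k by (simp add: r_def)
    have iota: "\<iota> N u = (N powr (-r)) *\<^sub>R w u" if "N > 0" for N u
      using iota_eq[OF that apos] by (simp add: \<iota>_def \<nu>_def w_def)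
    have nu0: "\<nu> N l > 0" if "N > 0" for N l using apos[of l] that by (simp add: \<nu>_def)
    have claimA: "(G N has_integral Ex N) UNIV" if N0: "N > 0" for N
    proof -
      define Hf where "Hf x = exp (N * ?g x + (\<Sum>l\<in>UNIV. t$l * \<nu> N l * x$l)) * \<phi> x" for x
      have cg: "continuous_on UNIV ?g" by (rule curie_cont)
      have cHf: "continuous_on UNIV Hf" unfolding Hf_def[abs_def]
        by (intro continuous_intros cg phic)
      have I: "((\<lambda>u. if mu + \<iota> N u \<in> ball mu \<delta> then Hf (mu + \<iota> N u) else 0)
          has_integral (prod (\<nu> N) UNIV * integral (ball mu \<delta>) Hf)) UNIV"
        unfolding \<iota>_def by (rule cov[OF cHf d0]) (rule nu0[OF N0])
      define S where "S = (\<Sum>l\<in>UNIV. t$l * \<nu> N l * mu$l)"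
      define K0 where "K0 = exp (- S) * exp (- N * ?F)"
      have A: "((\<lambda>u. K0 * (if mu + \<iota> N u \<in> ball mu \<delta> then Hf (mu + \<iota> N u) else 0)) has_integral
           K0 * (prod (\<nu> N) UNIV * integral (ball mu \<delta>) Hf)) UNIV"
        by (rule has_integral_mult_right[OF I])
      have B: "(\<lambda>u. K0 * (if mu + \<iota> N u \<in> ball mu \<delta> then Hf (mu + \<iota> N u) else 0)) = G N"
      proof
        fix u
        have trm: "t$l * \<nu> N l * (mu + \<iota> N u)$l = t$l * \<nu> N l * mu$l + t$l * u$l" for l
          using nu0[OF N0, of l] by (simp add: \<iota>_def field_simps)
        have s: "(\<Sum>l\<in>UNIV. t$l * \<nu> N l * (mu + \<iota> N u)$l) = S + t \<bullet> u"
          by (simp only: trm sum.distrib S_def inner_vec_def inner_real_def)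
        have e: "K0 * exp (N * ?g (mu + \<iota> N u) + (S + t \<bullet> u)) = exp (N * (?g (mu + \<iota> N u) - ?F) + t \<bullet> u)"
        proof -
          have "K0 * exp (N * ?g (mu + \<iota> N u) + (S + t \<bullet> u)) =
                exp (- S + - N * ?F + (N * ?g (mu + \<iota> N u) + (S + t \<bullet> u)))"
            by (simp only: K0_def exp_add)
          also have "- S + - N * ?F + (N * ?g (mu + \<iota> N u) + (S + t \<bullet> u)) = N * (?g (mu + \<iota> N u) - ?F) + t \<bullet> u"
            by (simp add: algebra_simps)
          finally show ?thesis .
        qed
        show "K0 * (if mu + \<iota> N u \<in> ball mu \<delta> then Hf (mu + \<iota> N u) else 0) = G N u"
        proof (cases "mu + \<iota> N u \<in> ball mu \<delta>")
          case True
          have "K0 * Hf (mu + \<iota> N u) = (K0 * exp (N * ?g (mu + \<iota> N u) + (S + t \<bullet> u))) * \<phi> (mu + \<iota> N u)"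
            unfolding Hf_def s by (simp only: mult.assoc)
          then show ?thesis using True by (simp only: e G_def if_True)
        next
          case False
          then show ?thesis by (simp add: G_def)
        qed
      qed
      have C: "K0 * (prod (\<nu> N) UNIV * integral (ball mu \<delta>) Hf) = Ex N"
      proof -
        have "(\<Prod>l\<in>UNIV. \<alpha>$l * N) powr r = prod (\<nu> N) UNIV"
          by (simp add: prod_powr_distrib \<nu>_def)
        moreover have "Hf = (\<lambda>x. exp (N * ?g x + (\<Sum>l\<in>UNIV. t$l * (\<alpha>$l * N) powr r * x$l)) * \<phi> x)"
          by (simp add: Hf_def[abs_def] \<nu>_def)
        ultimately show ?thesis by (simp add: Ex_def K0_def S_def \<nu>_def mult_ac)
      qed
      show ?thesis using A unfolding B C .
    qed
    define hb where "hb u = Bp * exp (- c2 * norm u ^ (2*k) + norm t * norm u)" for u :: "real^'n"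
    have hb_int: "hb integrable_on UNIV"
    proof (rule exp_decay_integrable[OF _ c2 k])
      show "continuous_on UNIV hb" unfolding hb_def[abs_def] by (intro continuous_intros)
      show "\<bar>hb u\<bar> \<le> Bp * exp (- c2 * norm u ^ (2*k) + norm t * norm u)" for u
        using Bp0 by (simp add: hb_def abs_mult)
    qed
    have bound: "\<bar>G N u\<bar> \<le> hb u" if N1: "N \<ge> 1" for N u
    proof (cases "mu + \<iota> N u \<in> ball mu \<delta>")
      case False
      then show ?thesis using Bp0 by (simp add: G_def hb_def)
    next
      case True
      have N0: "N > 0" using N1 by simp
      define sN where "sN = N powr (-r)"
      have sN0: "sN > 0" using N0 by (simp add: sN_def)
      have ie: "\<iota> N u = sN *\<^sub>R w u" using iota[OF N0] by (simp add: sN_def)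
      have nb: "norm (\<iota> N u) < \<delta>" using True by (simp add: dist_norm)
      have lbi: "?g (mu + \<iota> N u) - ?F \<le> - c2 * norm (\<iota> N u) ^ (2*k)"
        using lb[of "\<iota> N u"] nb dle by simp
      have sk: "sN ^ (2*k) = 1 / N" unfolding sN_def by (rule pow_scale[OF N0 kr])
      have "N * norm (\<iota> N u) ^ (2*k) = N * sN ^ (2*k) * norm (w u) ^ (2*k)"
        using sN0 by (simp add: ie power_mult_distrib)
      also have "\<dots> = norm (w u) ^ (2*k)" using sk N0 by simp
      finally have nn: "N * norm (\<iota> N u) ^ (2*k) = norm (w u) ^ (2*k)" .
      have "norm u ^ (2*k) \<le> norm (w u) ^ (2*k)" by (rule power_mono[OF norm_w]) simp
      then have "N * (?g (mu + \<iota> N u) - ?F) \<le> - c2 * norm u ^ (2*k)"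
        using mult_left_mono[OF lbi, of N] N0 nn c2
        by (smt (verit, best) mult.left_commute mult_left_mono mult_minus_left)
      moreover have "t \<bullet> u \<le> norm t * norm u" by (rule norm_cauchy_schwarz)
      ultimately have ex: "exp (N * (?g (mu + \<iota> N u) - ?F) + t \<bullet> u) \<le> exp (- c2 * norm u ^ (2*k) + norm t * norm u)"
        by simp
      have "\<bar>G N u\<bar> = exp (N * (?g (mu + \<iota> N u) - ?F) + t \<bullet> u) * \<bar>\<phi> (mu + \<iota> N u)\<bar>"
        using True by (simp add: G_def abs_mult)
      also have "\<dots> \<le> exp (- c2 * norm u ^ (2*k) + norm t * norm u) * Bp"
        by (rule mult_mono[OF ex Bp]) auto
      finally show ?thesis by (simp add: hb_def mult.commute)
    qed
    have conv: "(\<lambda>i. G (Ns i) u) \<longlonglongrightarrow> \<phi> mu * E u"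
      if lim: "filterlim Ns at_top sequentially" and pos: "\<And>i. Ns i \<ge> 1" for Ns u
    proof -
      define s where "s i = Ns i powr (-r)" for i
      have Npos: "Ns i > 0" for i using pos[of i] by simp
      have spos: "s i > 0" for i using Npos[of i] by (simp add: s_def)
      have s0: "s \<longlonglongrightarrow> 0" unfolding s_def by (rule tendsto_neg_powr[OF _ lim]) (use r0 in simp)
      have y: "\<iota> (Ns i) u = s i *\<^sub>R w u" for i using iota[OF Npos[of i]] by (simp add: s_def)
      have ylim: "(\<lambda>i. s i *\<^sub>R w u) \<longlonglongrightarrow> 0" using tendsto_scaleR[OF s0 tendsto_const, of "w u"] by simp
      have ev_in: "eventually (\<lambda>i. mu + \<iota> (Ns i) u \<in> ball mu \<delta>) sequentially"
        using tendstoD[OF ylim d0] by eventually_elim (simp add: y dist_norm)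
      have sk: "Ns i * s i ^ (2*k) = 1" for i
        using pow_scale[OF Npos[of i] kr] Npos[of i] by (simp add: s_def)
      have Tlim: "(\<lambda>i. Ns i * (?g (mu + s i *\<^sub>R w u) - ?F)) \<longlonglongrightarrow> ?T (w u)"
      proof (rule LIM_zero_cancel, rule Lim_null_comparison)
        show "(\<lambda>i. C * norm (w u) ^ (2*k+1) * s i) \<longlonglongrightarrow> 0"
          using tendsto_mult_right_zero[OF s0, of "C * norm (w u) ^ (2*k+1)"] by simp
        show "\<forall>\<^sub>F i in sequentially. norm (Ns i * (?g (mu + s i *\<^sub>R w u) - ?F) - ?T (w u))
                 \<le> C * norm (w u) ^ (2*k+1) * s i"
        proof (rule always_eventually, rule allI)
          fix i
          have Th: "?T (s i *\<^sub>R w u) = s i ^ (2*k) * ?T (w u)" by (rule tt_homog[OF k])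
          have "Ns i * (?g (mu + s i *\<^sub>R w u) - ?F) - ?T (w u) =
                Ns i * (?g (mu + s i *\<^sub>R w u) - ?F - ?T (s i *\<^sub>R w u))"
          proof -
            have NT: "Ns i * ?T (s i *\<^sub>R w u) = ?T (w u)"
              unfolding Th mult.assoc[symmetric] sk[of i] by simp
            then show ?thesis by (simp only: right_diff_distrib)
          qed
          then have "norm (Ns i * (?g (mu + s i *\<^sub>R w u) - ?F) - ?T (w u)) =
                Ns i * \<bar>?g (mu + s i *\<^sub>R w u) - ?F - ?T (s i *\<^sub>R w u)\<bar>"
            using Npos[of i] by (simp add: abs_mult)
          also have "\<dots> \<le> Ns i * (C * norm (s i *\<^sub>R w u) ^ (2*k+1))"
            by (rule mult_left_mono[OF C]) (use Npos[of i] in simp)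
          also have "\<dots> = C * norm (w u) ^ (2*k+1) * s i * (Ns i * s i ^ (2*k))"
            using spos[of i] by (simp add: power_mult_distrib mult_ac)
          also have "\<dots> = C * norm (w u) ^ (2*k+1) * s i" using sk[of i] by simp
          finally show "norm (Ns i * (?g (mu + s i *\<^sub>R w u) - ?F) - ?T (w u)) \<le> C * norm (w u) ^ (2*k+1) * s i" .
        qed
      qed
      have icont: "isCont \<phi> mu" using phic by (simp add: continuous_on_eq_continuous_at)
      have philim: "(\<lambda>i. \<phi> (mu + s i *\<^sub>R w u)) \<longlonglongrightarrow> \<phi> mu"
      proof -
        have "(\<lambda>i. mu + s i *\<^sub>R w u) \<longlonglongrightarrow> mu"
          using tendsto_add[OF tendsto_const ylim, of mu] by simp
        from isCont_tendsto_compose[OF icont this] show ?thesis .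
      qed
      have L: "(\<lambda>i. exp (Ns i * (?g (mu + s i *\<^sub>R w u) - ?F) + t \<bullet> u) * \<phi> (mu + s i *\<^sub>R w u))
               \<longlonglongrightarrow> exp (?T (w u) + t \<bullet> u) * \<phi> mu"
        by (intro tendsto_intros Tlim philim)
      have ev: "eventually (\<lambda>i. exp (Ns i * (?g (mu + s i *\<^sub>R w u) - ?F) + t \<bullet> u) * \<phi> (mu + s i *\<^sub>R w u)
                 = G (Ns i) u) sequentially"
        using ev_in by eventually_elim (simp add: G_def y)
      have "(\<lambda>i. G (Ns i) u) \<longlonglongrightarrow> exp (?T (w u) + t \<bullet> u) * \<phi> mu"
        by (rule Lim_transform_eventually[OF L ev])
      then show ?thesis by (simp add: E_def mult.commute)
    qed
    have main: "(Ex \<longlongrightarrow> \<phi> mu * integral UNIV E) at_top"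
    proof (rule tendsto_at_topI_sequentially)
      fix X :: "nat \<Rightarrow> real" assume X: "filterlim X at_top sequentially"
      define Ns where "Ns i = max 1 (X i)" for i
      have Ns1: "Ns i \<ge> 1" for i by (simp add: Ns_def)
      have NsX: "filterlim Ns at_top sequentially"
        by (rule filterlim_at_top_mono[OF X]) (simp add: Ns_def)
      have intG: "G (Ns i) integrable_on UNIV" for i
        using claimA[of "Ns i"] Ns1[of i] has_integral_integrable by force
      have dct: "(\<lambda>i. integral UNIV (G (Ns i))) \<longlonglongrightarrow> integral UNIV (\<lambda>u. \<phi> mu * E u)"
      proof (rule dominated_convergence(2)[OF intG hb_int])
        show "norm (G (Ns i) u) \<le> hb u" for i u using bound[OF Ns1[of i]] by simp
        show "(\<lambda>i. G (Ns i) u) \<longlonglongrightarrow> \<phi> mu * E u" for u by (rule conv[OF NsX Ns1])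
      qed
      have eqI: "integral UNIV (G (Ns i)) = Ex (Ns i)" for i
        using claimA[of "Ns i"] Ns1[of i] integral_unique by force
      have evX: "eventually (\<lambda>i. Ex (Ns i) = Ex (X i)) sequentially"
      proof -
        have "eventually (\<lambda>i. X i \<ge> 1) sequentially" using X by (simp add: filterlim_at_top)
        then show ?thesis by eventually_elim (simp add: Ns_def)
      qed
      have "(\<lambda>i. Ex (Ns i)) \<longlonglongrightarrow> \<phi> mu * integral UNIV E"
        using dct by (simp add: eqI integral_mult_right)
      then show "(\<lambda>i. Ex (X i)) \<longlonglongrightarrow> \<phi> mu * integral UNIV E"
        by (rule Lim_transform_eventually[OF _ evX])
    qed
    show "((\<lambda>N. exp (- (\<Sum>l\<in>UNIV. t$l * (\<alpha>$l * N) powr r * mu$l))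
               * (\<Prod>l\<in>UNIV. \<alpha>$l * N) powr r
               * exp (- N * ?F)
               * integral (ball mu \<delta>)
                   (\<lambda>x. exp (N * ?g x + (\<Sum>l\<in>UNIV. t$l * (\<alpha>$l * N) powr r * x$l)) * \<phi> x))
            \<longlongrightarrow> \<phi> mu * integral UNIV (\<lambda>x. exp (?T (\<chi> l. x$l / \<alpha>$l powr r) + t \<bullet> x))) at_top"
      using main unfolding Ex_def[abs_def] E_def[abs_def] w_def[abs_def] .
  qed
qed


theorem mainTheorem17:
  fixes \<alpha> :: "real^'n" and J :: "real^'n^'n" and h :: "real^'n" and mu :: "real^'n" and k :: nat
  assumes alpha_pos: "\<forall>l. 0 < \<alpha>$l \<and> \<alpha>$l < 1"
    and alpha_sum: "(\<Sum>l\<in>UNIV. \<alpha>$l) = 1"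
    and J_sym: "transpose J = J"
    and J_diag: "\<forall>l. J$l$l > 0"
    and J_pd: "pos_def_matrix J"
    and mu_max: "\<forall>x. curie_f \<alpha> J h x \<le> curie_f \<alpha> J h mu"
    and mu_type: "homogeneous_type (curie_f \<alpha> J h) mu k"
  shows "\<exists>\<delta>\<mu>>0. \<forall>(t::real^'n) \<delta> (\<phi>::real^'n \<Rightarrow> real).
           0 < \<delta> \<and> \<delta> \<le> \<delta>\<mu> \<and> continuous_on UNIV \<phi> \<and> bounded (range \<phi>) \<longrightarrow>
           (\<lambda>x. exp (taylor_term (curie_f \<alpha> J h) mu (2*k)
                         (\<chi> l. x$l / (\<alpha>$l powr (1 / (2 * real k)))) + t \<bullet> x))
             integrable_on UNIV \<and>
           ((\<lambda>N::real.
               exp (- (\<Sum>l\<in>UNIV. t$l * (\<alpha>$l * N) powr (1 / (2 * real k)) * mu$l))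
               * (\<Prod>l\<in>UNIV. \<alpha>$l * N) powr (1 / (2 * real k))
               * exp (- N * curie_f \<alpha> J h mu)
               * integral (ball mu \<delta>)
                   (\<lambda>x. exp (N * curie_f \<alpha> J h x
                             + (\<Sum>l\<in>UNIV. t$l * (\<alpha>$l * N) powr (1 / (2 * real k)) * x$l))
                        * \<phi> x))
            \<longlongrightarrow> \<phi> mu * integral UNIV
                 (\<lambda>x. exp (taylor_term (curie_f \<alpha> J h) mu (2*k)
                         (\<chi> l. x$l / (\<alpha>$l powr (1 / (2 * real k)))) + t \<bullet> x))) at_top"
  using assms by (rule main)

end
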